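(* Let $p$ be an odd prime and $q$ an even power of $p$. Let $\chi$ be a non-trivial multiplicative character of $\mathbb{F}_q$ and $A \subseteq \mathbb{F}_q$ with $|A|=\sqrt{q}$. For $c\in\mathbb{F}_q^*$ let $S(q,A;c)=\sum_{a \in A} e_p\big(\operatorname{Tr}(ac)\big)$. Then $\chi(a-b)=1$ for all $a,b \in A$ with $a \neq b$ if and only if for every $c \in \mathbb{F}_q^*$ the complex numbers $\chi(c)|S(q,A;c)|^2$ and $G(\chi)$ share the same argument.
   Context: $\operatorname{Tr}$ is the absolute trace $\mathbb{F}_q \to \mathbb{F}_p$ and $e_p(x)=e^{2\pi i x/p}$ for $x\in\mathbb{F}_p$. Multiplicative characters are extended by $\chi(0)=0$. $G(\chi)=\sum_{c \in \mathbb{F}_q}\chi(c)e_p(\operatorname{Tr}(c))$. The number $0$ is regarded as sharing the argument of any complex number. *)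

theory Defs
  imports "HOL-Analysis.Analysis"
begin

definition fdeg :: "'a::{field,finite} itself \<Rightarrow> nat" where
  "fdeg T = (THE n. CARD('a) = CHAR('a) ^ n)"

text \<open>Absolute trace F_q -> F_p (values in the prime subfield of 'a).\<close>
definition abs_trace :: "'a::{field,finite} \<Rightarrow> 'a" where
  "abs_trace x = (\<Sum>i<fdeg TYPE('a). x ^ (CHAR('a) ^ i))"

text \<open>e_p on the prime subfield: for y = of_int m, e_p(y) = exp(2 pi i m / p).\<close>
definition e_p :: "'a::{field,finite} \<Rightarrow> complex" where
  "e_p y = cis (2 * pi * real_of_int (SOME m::int. of_int m = y) / real CHAR('a))"

definition mult_char :: "('a::{field,finite} \<Rightarrow> complex) \<Rightarrow> bool" where
  "mult_char chi \<longleftrightarrow> chi 0 = 0 \<and> chi 1 = 1 \<and>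
     (\<forall>x y. x \<noteq> 0 \<longrightarrow> y \<noteq> 0 \<longrightarrow> chi (x * y) = chi x * chi y)"

definition gauss_sum :: "('a::{field,finite} \<Rightarrow> complex) \<Rightarrow> complex" where
  "gauss_sum chi = (\<Sum>c\<in>UNIV. chi c * e_p (abs_trace c))"

definition S_sum :: "'a::{field,finite} set \<Rightarrow> 'a \<Rightarrow> complex" where
  "S_sum A c = (\<Sum>a\<in>A. e_p (abs_trace (a * c)))"

definition same_arg :: "complex \<Rightarrow> complex \<Rightarrow> bool" where
  "same_arg z w \<longleftrightarrow> z = 0 \<or> w = 0 \<or> Arg z = Arg w"

end

theory Submission imports Defs "HOL-Computational_Algebra.Polynomial" "HOL-Computational_Algebra.Primes" "HOL-Number_Theory.Cong" begin

lemma ff_pow_card: "(x::'a::{field,finite}) ^ CARD('a) = x"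
proof (cases "x = 0")
  case False
  have "x * (\<Prod>y\<in>UNIV-{0}. x * y) = x * x ^ (card (UNIV :: 'a set) - 1) * \<Prod>(UNIV-{0})"
    by (simp add: prod.distrib mult_ac)
  also have "x * x ^ (card (UNIV :: 'a set) - 1) = x ^ Suc (card (UNIV :: 'a set) - 1)"
    by (subst power_Suc) auto
  also have "Suc (card (UNIV :: 'a set) - 1) = card (UNIV :: 'a set)"
    using finite_UNIV_card_ge_0[where ?'a = 'a] by simp
  also have "(\<Prod>y\<in>UNIV-{0}. x * y) = (\<Prod>y\<in>UNIV-{0}. y)"
    by (rule prod.reindex_bij_witness[of _ "\<lambda>y. y / x" "\<lambda>y. x * y"]) (use False in auto)
  finally show ?thesis
    by simp
qed (use finite_UNIV_card_ge_0[where ?'a = 'a] in auto)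

lemma ff_pow_card_power: "(x::'a::{field,finite}) ^ (CARD('a) ^ j) = x"
  by (induction j) (simp_all add: ff_pow_card power_mult)

definition psi :: "'a::{field,finite} \<Rightarrow> complex" where "psi x = e_p (abs_trace x)"

context
  fixes n :: nat
  assumes prm: "prime CHAR('a::{field,finite})" and crd: "CARD('a) = CHAR('a) ^ n"
begin

lemma fdeg_eq: "fdeg TYPE('a) = n"
  unfolding fdeg_def using prm crd prime_gt_1_nat[OF prm]
  by (intro the_equality) (auto simp: power_inject_exp prime_gt_1_nat)

lemma trace_eq: "abs_trace (x::'a) = (\<Sum>i<n. x ^ (CHAR('a) ^ i))"
  unfolding abs_trace_def fdeg_eq ..

lemma trace_add: "abs_trace (x + y :: 'a) = abs_trace x + abs_trace y"
  unfolding trace_eq by (simp add: freshmans_dream'[OF prm] sum.distrib)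

lemma trace_pow: "abs_trace (x :: 'a) ^ CHAR('a) = abs_trace x"
proof -
  define f where "f i = x ^ (CHAR('a) ^ i)" for i
  have "abs_trace x ^ CHAR('a) = (\<Sum>i<n. f i ^ CHAR('a))"
    unfolding trace_eq f_def by (rule freshmans_dream_sum[OF prm refl])
  also have "\<dots> = (\<Sum>i<n. f (Suc i))"
    by (simp add: f_def power_mult[symmetric] mult.commute)
  also have "\<dots> = (\<Sum>i<n. f i)"
  proof -
    have "(\<Sum>i<Suc n. f i) = f 0 + (\<Sum>i<n. f (Suc i))" by (rule sum.lessThan_Suc_shift)
    moreover have "(\<Sum>i<Suc n. f i) = (\<Sum>i<n. f i) + f n" by simp
    moreover have "f n = f 0" unfolding f_def using ff_pow_card[of x] crd by simp
    ultimately show ?thesis by (simp add: add.commute)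
  qed
  finally show ?thesis unfolding trace_eq f_def .
qed

lemma of_nat_pow_char: "(of_nat k :: 'a) ^ CHAR('a) = of_nat k"
proof (induction k)
  case 0 then show ?case using prm by (simp add: prime_gt_0_nat)
next
  case (Suc k)
  then show ?case by (simp add: freshmans_dream[OF prm refl])
qed

lemma prime_subfield:
  assumes "(y::'a) ^ CHAR('a) = y" shows "\<exists>k::int. y = of_int k"
proof -
  define p where "p = CHAR('a)"
  have p2: "p \<ge> 2" using prm p_def prime_ge_2_nat by blast
  define Q :: "'a poly" where "Q = monom 1 p - monom 1 1"
  have polyQ: "poly Q z = z ^ p - z" for z by (simp add: Q_def poly_monom)
  have "coeff Q p = 1" using p2 by (simp add: Q_def coeff_monom)
  hence Q0: "Q \<noteq> 0" by auto
  have "degree Q \<le> p" unfolding Q_def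
    using degree_diff_le_max[of "monom (1::'a) p" "monom 1 1"] degree_monom_le[of "1::'a" p]
      degree_monom_le[of "1::'a" 1] p2 by linarith
  hence cR: "card {z. poly Q z = 0} \<le> p" using card_poly_roots_bound[OF Q0] by linarith
  have R: "{z. poly Q z = 0} = {z. z ^ p = z}" by (simp add: polyQ)
  have sub: "of_nat ` {..<p} \<subseteq> {z::'a. z ^ p = z}" using of_nat_pow_char p_def by auto
  have inj: "inj_on (of_nat :: nat \<Rightarrow> 'a) {..<p}"
    by (auto simp: inj_on_def of_nat_eq_iff_cong_CHAR p_def dest: cong_less_modulus_unique_nat)
  have "card (of_nat ` {..<p} :: 'a set) = p" using card_image[OF inj] by simp
  have eq: "of_nat ` {..<p} = {z::'a. z ^ p = z}"
  proof (rule card_subset_eq)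
    show "finite {z::'a. z ^ p = z}" by simp
    show "of_nat ` {..<p} \<subseteq> {z::'a. z ^ p = z}" by (rule sub)
    have "card (of_nat ` {..<p} :: 'a set) \<le> card {z::'a. z ^ p = z}" by (rule card_mono) (use sub in auto)
    thus "card (of_nat ` {..<p} :: 'a set) = card {z::'a. z ^ p = z}" using cR R \<open>card (of_nat ` {..<p} :: 'a set) = p\<close> by simp
  qed
  with assms p_def obtain k where "y = of_nat k" by auto
  thus ?thesis by (intro exI[of _ "int k"]) simp
qed

lemma trace_in_prime: "\<exists>k::int. abs_trace (x::'a) = of_int k"
  using prime_subfield trace_pow by blast

lemma trace_nonzero: "\<exists>x::'a. abs_trace x \<noteq> 0"
proof -
  define p where "p = CHAR('a)"
  have p2: "p \<ge> 2" using prm p_def prime_ge_2_nat by blast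
  have n1: "n \<ge> 1"
  proof (rule ccontr)
    assume "\<not> n \<ge> 1" hence "CARD('a) = 1" using crd by simp
    moreover have "card {0::'a, 1} \<le> CARD('a)" by (rule card_mono) auto
    ultimately show False by simp
  qed
  define P :: "'a poly" where "P = (\<Sum>i<n. monom 1 (p ^ i))"
  have polyP: "poly P z = abs_trace z" for z by (simp add: P_def poly_sum poly_monom trace_eq p_def)
  have "coeff P (p ^ (n - 1)) = (\<Sum>i<n. if p ^ i = p ^ (n-1) then 1 else 0)"
    by (simp add: P_def coeff_sum coeff_monom)
  also have "\<dots> = (\<Sum>i\<in>{n-1}. 1)"
    using p2 n1 by (intro sum.mono_neutral_cong_right) (auto simp: power_inject_exp)
  finally have "coeff P (p ^ (n - 1)) = 1" by simp
  hence P0: "P \<noteq> 0" by auto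
  have "degree P \<le> p ^ (n - 1)" unfolding P_def
  proof (rule degree_sum_le)
    fix i assume "i \<in> {..<n}"
    hence "p ^ i \<le> p ^ (n - 1)" using p2 by (intro power_increasing) auto
    thus "degree (monom (1::'a) (p ^ i)) \<le> p ^ (n - 1)" using degree_monom_le[of "1::'a" "p^i"] by linarith
  qed simp
  hence "card {z. poly P z = 0} \<le> p ^ (n - 1)" using card_poly_roots_bound[OF P0] by linarith
  moreover have "p ^ (n - 1) < CARD('a)" using crd p_def p2 n1
    by (metis diff_less less_numeral_extra(1) order.strict_trans1 one_less_numeral_iff power_strict_increasing_iff semiring_norm(76) less_le_trans)
  ultimately have "{z. poly P z = 0} \<noteq> UNIV" by auto
  thus ?thesis using polyP by auto
qed


lemma e_p_of_int: "e_p (of_int k :: 'a) = cis (2 * pi * of_int k / real CHAR('a))"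
proof -
  define m where "m = (SOME m::int. of_int m = (of_int k::'a))"
  have "of_int m = (of_int k :: 'a)" unfolding m_def by (rule someI[of _ k]) simp
  then have "[k = m] (mod int CHAR('a))" by (simp add: of_int_eq_iff_cong_CHAR cong_sym_eq)
  then obtain t where t: "m = k + int CHAR('a) * t" by (auto simp: cong_iff_lin)
  have pp: "real CHAR('a) > 0" using prm prime_gt_0_nat by simp
  have "2 * pi * of_int m / real CHAR('a) = 2 * pi * of_int k / real CHAR('a) + 2 * pi * of_int t"
    using pp by (simp add: t field_simps)
  hence "e_p (of_int k :: 'a) = cis (2 * pi * of_int k / real CHAR('a) + 2 * pi * of_int t)"
    unfolding e_p_def m_def[symmetric] by simp
  also have "\<dots> = cis (2 * pi * of_int k / real CHAR('a)) * cis (2 * pi * of_int t)"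
    by (rule cis_mult[symmetric])
  also have "cis (2 * pi * of_int t) = 1" by (rule cis_multiple_2pi) simp
  hence "cis (2 * pi * of_int k / real CHAR('a)) * cis (2 * pi * of_int t) = cis (2 * pi * of_int k / real CHAR('a))" by simp
  finally show ?thesis by simp
qed

lemma trace_zero: "abs_trace (0::'a) = 0"
  unfolding trace_eq by (rule sum.neutral) (use prm prime_gt_0_nat in \<open>auto simp: power_0_left\<close>)

lemma psi_add: "psi (x + y :: 'a) = psi x * psi y"
proof -
  obtain a b where a: "abs_trace x = of_int a" and b: "abs_trace y = of_int b"
    using trace_in_prime by blast
  have h: "abs_trace (x + y) = of_int (a + b)" by (simp add: trace_add a b)
  show ?thesis unfolding psi_def h a b e_p_of_int
    by (simp add: cis_mult add_divide_distrib distrib_left)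
qed

lemma psi_norm: "norm (psi (x::'a)) = 1"
proof -
  obtain a where a: "abs_trace x = of_int a" using trace_in_prime by blast
  show ?thesis unfolding psi_def a e_p_of_int by simp
qed

lemma psi_zero: "psi (0::'a) = 1"
  unfolding psi_def trace_zero using e_p_of_int[of 0] by simp

lemma psi_neg: "psi (- x :: 'a) = cnj (psi x)"
proof -
  have "psi (-x) * psi x = 1" using psi_add[of "-x" x] psi_zero by simp
  moreover have "psi x * cnj (psi x) = 1"
    using complex_norm_square[of "psi x"] psi_norm[of x] by simp
  ultimately show ?thesis by (metis mult.assoc mult.commute mult_1_right mult_1_left)
qed

lemma psi_nontriv: "\<exists>x::'a. psi x \<noteq> 1"
proof -
  obtain x :: 'a where x: "abs_trace x \<noteq> 0" using trace_nonzero by blast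
  obtain a where a: "abs_trace x = of_int a" using trace_in_prime by blast
  have nd: "\<not> int CHAR('a) dvd a" using x a of_int_eq_0_iff_char_dvd by auto
  have pp: "real CHAR('a) > 0" using prm prime_gt_0_nat by simp
  show ?thesis
  proof (intro exI[of _ x] notI)
    assume "psi x = 1"
    hence "exp (\<i> * complex_of_real (2 * pi * of_int a / real CHAR('a))) = 1"
      unfolding psi_def a e_p_of_int cis_conv_exp by simp
    then obtain k :: int where "2 * pi * of_int a / real CHAR('a) = of_int (2 * k) * pi"
      unfolding exp_eq_1 by auto
    hence "real_of_int a = of_int k * real CHAR('a)" using pp by (simp add: field_simps)
    hence "a = k * int CHAR('a)" by (metis of_int_eq_iff of_int_mult of_int_of_nat_eq)
    thus False using nd by simp
  qed
qed

lemma sum_psi: "(\<Sum>c\<in>UNIV. psi (c * x :: 'a)) = (if x = 0 then of_nat CARD('a) else 0)"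
proof (cases "x = 0")
  case True thus ?thesis by (simp add: psi_zero)
next
  case False
  have "(\<Sum>c\<in>UNIV. psi (c * x :: 'a)) = (\<Sum>c\<in>(UNIV::'a set). psi c)"
    by (rule sum.reindex_bij_witness[of _ "\<lambda>c. c / x" "\<lambda>c. c * x"]) (use False in auto)
  moreover obtain x0 :: 'a where x0: "psi x0 \<noteq> 1" using psi_nontriv by blast
  moreover have "(\<Sum>c\<in>UNIV. psi (c + x0)) = (\<Sum>c\<in>(UNIV::'a set). psi c)"
    by (rule sum.reindex_bij_witness[of _ "\<lambda>c. c - x0" "\<lambda>c. c + x0"]) auto
  moreover have "(\<Sum>c\<in>UNIV. psi (c + x0)) = (\<Sum>c\<in>(UNIV::'a set). psi c) * psi x0"
    by (simp add: psi_add sum_distrib_right)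
  ultimately show ?thesis using False
    by (metis mult_cancel_left1)
qed


lemma psi_diff: "psi (a - b :: 'a) = psi a * cnj (psi b)"
  using psi_add[of a "-b"] psi_neg[of b] by simp

lemma sum_psi': "(\<Sum>c\<in>UNIV. psi (x * c :: 'a)) = (if x = 0 then of_nat CARD('a) else 0)"
  using sum_psi[of x] by (simp add: mult.commute)

lemma parseval:
  fixes f :: "'a \<Rightarrow> complex"
  shows "(\<Sum>x\<in>UNIV. (\<Sum>c\<in>UNIV. f c * psi (c*x)) * cnj (\<Sum>c\<in>UNIV. f c * psi (c*x)))
         = of_nat CARD('a) * (\<Sum>c\<in>UNIV. f c * cnj (f c))"
proof -
  have trm: "f c * psi (c*x) * cnj (f d * psi (d*x)) = f c * cnj (f d) * psi (x * (c - d))" for c d x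
  proof -
    have "x * (c - d) = c * x - d * x" by (simp add: algebra_simps)
    hence "psi (x * (c - d)) = psi (c*x) * cnj (psi (d*x))" by (simp add: psi_diff)
    thus ?thesis by simp
  qed
  have "(\<Sum>x\<in>UNIV. (\<Sum>c\<in>UNIV. f c * psi (c*x)) * cnj (\<Sum>c\<in>UNIV. f c * psi (c*x)))
      = (\<Sum>x\<in>UNIV. \<Sum>c\<in>UNIV. \<Sum>d\<in>UNIV. f c * cnj (f d) * psi (x * (c - d)))"
    by (simp only: cnj_sum sum_product trm)
  also have "\<dots> = (\<Sum>c\<in>UNIV. \<Sum>d\<in>UNIV. \<Sum>x\<in>UNIV. f c * cnj (f d) * psi (x * (c - d)))"
  proof -
    have "(\<Sum>x\<in>UNIV. \<Sum>c\<in>UNIV. \<Sum>d\<in>UNIV. f c * cnj (f d) * psi (x * (c - d)))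
        = (\<Sum>c\<in>UNIV. \<Sum>x\<in>UNIV. \<Sum>d\<in>UNIV. f c * cnj (f d) * psi (x * (c - d)))"
      by (rule sum.swap)
    also have "\<dots> = (\<Sum>c\<in>UNIV. \<Sum>d\<in>UNIV. \<Sum>x\<in>UNIV. f c * cnj (f d) * psi (x * (c - d)))"
      by (rule sum.cong[OF refl], rule sum.swap)
    finally show ?thesis .
  qed
  also have "\<dots> = (\<Sum>c\<in>UNIV. \<Sum>d\<in>UNIV. f c * cnj (f d) * (\<Sum>x\<in>UNIV. psi (x * (c - d))))"
    by (simp add: sum_distrib_left)
  also have "\<dots> = (\<Sum>c\<in>UNIV. \<Sum>d\<in>UNIV. if c = d then of_nat CARD('a) * (f c * cnj (f c)) else 0)"
    by (intro sum.cong refl) (auto simp: sum_psi)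
  also have "\<dots> = (\<Sum>c\<in>UNIV. of_nat CARD('a) * (f c * cnj (f c)))"
    by simp
  finally show ?thesis by (simp only: sum_distrib_left)
qed

end

lemma chi_mult: "mult_char chi \<Longrightarrow> x \<noteq> 0 \<Longrightarrow> y \<noteq> 0 \<Longrightarrow> chi (x * y) = chi x * chi y"
  unfolding mult_char_def by blast

lemma chi_pow:
  assumes "mult_char chi" "x \<noteq> 0" shows "chi (x ^ k) = chi x ^ k"
proof (induction k)
  case 0 thus ?case using assms(1) by (simp add: mult_char_def)
next
  case (Suc k) thus ?case using chi_mult[OF assms(1) assms(2), of "x^k"] assms(2) by simp
qed

lemma card_ge2: "CARD('a::{field,finite}) \<ge> 2"
proof -
  have "card {0::'a, 1} \<le> CARD('a)" by (rule card_mono) auto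
  thus ?thesis by simp
qed

lemma chi_inv1:
  fixes chi :: "'a::{field,finite} \<Rightarrow> complex"
  assumes "mult_char chi" "x \<noteq> 0" shows "chi x * chi (inverse x) = 1"
  using chi_mult[OF assms(1) assms(2), of "inverse x"] assms by (simp add: mult_char_def)

lemma chi_norm:
  fixes chi :: "'a::{field,finite} \<Rightarrow> complex"
  assumes "mult_char chi" "x \<noteq> 0" shows "norm (chi x) = 1"
proof -
  have nz: "chi x \<noteq> 0" using chi_inv1[OF assms] by auto
  have "chi x ^ CARD('a) = chi x" using chi_pow[OF assms, of "CARD('a)"] ff_pow_card[of x] by simp
  moreover have "chi x ^ CARD('a) = chi x * chi x ^ (CARD('a) - 1)"
  proof -
    have "CARD('a) = Suc (CARD('a) - 1)" using card_ge2[where 'a='a] by simp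
    hence "chi x ^ CARD('a) = chi x ^ Suc (CARD('a) - 1)" by (rule arg_cong)
    thus ?thesis by (simp only: power_Suc)
  qed
  ultimately have "chi x ^ (CARD('a) - 1) = 1" using nz by simp
  hence h: "norm (chi x) ^ (CARD('a) - 1) = 1 ^ (CARD('a) - 1)" by (simp add: norm_power[symmetric])
  show ?thesis by (rule power_eq_imp_eq_base[OF h]) (use card_ge2[where 'a='a] in auto)
qed

lemma chi_inverse:
  fixes chi :: "'a::{field,finite} \<Rightarrow> complex"
  assumes "mult_char chi" "x \<noteq> 0" shows "chi (inverse x) = cnj (chi x)"
proof -
  have "chi x * cnj (chi x) = 1" using complex_norm_square[of "chi x"] chi_norm[OF assms] by simp
  moreover have "chi x * chi (inverse x) = 1" by (rule chi_inv1[OF assms])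
  ultimately show ?thesis by (metis mult.assoc mult.commute mult_1_left)
qed

lemma chi_sum_zero:
  fixes chi :: "'a::{field,finite} \<Rightarrow> complex"
  assumes "mult_char chi" "\<exists>x. x \<noteq> 0 \<and> chi x \<noteq> 1"
  shows "(\<Sum>c\<in>UNIV. chi c) = 0"
proof -
  obtain x1 where x1: "x1 \<noteq> 0" "chi x1 \<noteq> 1" using assms(2) by blast
  have "(\<Sum>c\<in>UNIV. chi (x1 * c)) = (\<Sum>c\<in>(UNIV::'a set). chi c)"
    by (rule sum.reindex_bij_witness[of _ "\<lambda>c. c / x1" "\<lambda>c. x1 * c"]) (use x1 in auto)
  moreover have "chi (x1 * c) = chi x1 * chi c" for c
    using chi_mult[OF assms(1) x1(1), of c] assms(1) by (cases "c = 0") (auto simp: mult_char_def)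
  ultimately have "(\<Sum>c\<in>(UNIV::'a set). chi c) = chi x1 * (\<Sum>c\<in>(UNIV::'a set). chi c)"
    by (simp add: sum_distrib_left)
  thus ?thesis using x1(2) by (metis mult_cancel_right1 mult.commute)
qed


lemma sum_le_eq_imp:
  fixes f g :: "'b \<Rightarrow> real"
  assumes "finite S" "\<And>x. x \<in> S \<Longrightarrow> f x \<le> g x" "sum f S = sum g S" "x \<in> S"
  shows "f x = g x"
proof -
  have "sum (\<lambda>x. g x - f x) S = 0" using assms(3) by (simp add: sum_subtractf)
  hence "\<forall>x\<in>S. g x - f x = 0" using sum_nonneg_eq_0_iff[OF assms(1), of "\<lambda>x. g x - f x"] assms(2) by simp
  thus ?thesis using assms(4) by simp
qed

lemma re_eq_norm: "Re w = cmod w \<Longrightarrow> w = complex_of_real (cmod w)"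
proof -
  assume h: "Re w = cmod w"
  have "(cmod w)\<^sup>2 = (Re w)\<^sup>2 + (Im w)\<^sup>2" by (rule cmod_power2)
  hence "Im w = 0" using h by simp
  thus ?thesis using h by (simp add: complex_eq_iff)
qed

lemma count_pairs:
  assumes "finite A"
  shows "(\<Sum>a\<in>A. \<Sum>b\<in>A. if a = b then 0 else (1::'b::comm_ring_1)) = of_nat (card A) * (of_nat (card A) - 1)"
proof -
  have "(\<Sum>b\<in>A. if a = b then 0 else (1::'b)) = of_nat (card A) - 1" if "a \<in> A" for a
  proof -
    have "(\<Sum>b\<in>A. if a = b then 0 else (1::'b)) = (\<Sum>b\<in>A. 1 - (if a = b then 1 else 0))"
      by (rule sum.cong) auto
    also have "\<dots> = of_nat (card A) - 1" using that assms by (simp add: sum_subtractf)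
    finally show ?thesis .
  qed
  hence "(\<Sum>a\<in>A. \<Sum>b\<in>A. if a = b then 0 else (1::'b)) = (\<Sum>a\<in>A. of_nat (card A) - 1)"
    by (rule sum.cong[OF refl])
  thus ?thesis by simp
qed

context
  fixes n :: nat
  assumes prm: "prime CHAR('a::{field,finite})" and crd: "CARD('a) = CHAR('a) ^ n"
begin

lemma chi_psi_sum:
  fixes chi :: "'a \<Rightarrow> complex"
  assumes mc: "mult_char chi" and nt: "\<exists>x. x \<noteq> 0 \<and> chi x \<noteq> 1"
  shows "(\<Sum>c\<in>UNIV. chi c * psi (c * x)) = (if x = 0 then 0 else cnj (chi x) * gauss_sum chi)"
proof (cases "x = 0")
  case True thus ?thesis using psi_zero[OF prm crd] chi_sum_zero[OF mc nt] by simp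
next
  case False
  have "(\<Sum>c\<in>UNIV. chi c * psi (c * x)) = (\<Sum>u\<in>UNIV. chi (u / x) * psi u)"
    by (rule sum.reindex_bij_witness[of _ "\<lambda>u. u / x" "\<lambda>c. c * x"]) (use False in auto)
  also have "\<dots> = (\<Sum>u\<in>UNIV. cnj (chi x) * (chi u * psi u))"
  proof (rule sum.cong[OF refl])
    fix u :: 'a
    have "chi (u / x) = chi u * cnj (chi x)"
    proof (cases "u = 0")
      case True thus ?thesis using mc by (simp add: mult_char_def)
    next
      case u: False
      have "chi (u / x) = chi u * chi (inverse x)"
        using chi_mult[OF mc u, of "inverse x"] False by (simp add: divide_inverse)
      thus ?thesis using chi_inverse[OF mc False] by simp
    qed
    thus "chi (u / x) * psi u = cnj (chi x) * (chi u * psi u)" by simp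
  qed
  also have "\<dots> = cnj (chi x) * gauss_sum chi"
    by (simp add: gauss_sum_def psi_def sum_distrib_left)
  finally show ?thesis using False by simp
qed

lemma sum_if0: "(\<Sum>x\<in>(UNIV::'a set). if x = 0 then 0 else K) = of_nat (CARD('a) - 1) * (K::complex)"
proof -
  have "(\<Sum>x\<in>(UNIV::'a set). if x = 0 then 0 else K) = (\<Sum>x\<in>UNIV - {0::'a}. K)"
    by (subst sum.If_cases) (auto simp: Compl_eq_Diff_UNIV)
  thus ?thesis by (simp add: card_Diff_singleton)
qed

lemma gauss_norm:
  fixes chi :: "'a \<Rightarrow> complex"
  assumes mc: "mult_char chi" and nt: "\<exists>x. x \<noteq> 0 \<and> chi x \<noteq> 1"
  shows "(cmod (gauss_sum chi))\<^sup>2 = real CARD('a)"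
proof -
  define G where "G = gauss_sum chi"
  have P: "(\<Sum>x\<in>UNIV. (\<Sum>c\<in>UNIV. chi c * psi (c*x)) * cnj (\<Sum>c\<in>UNIV. chi c * psi (c*x)))
         = of_nat CARD('a) * (\<Sum>c\<in>UNIV. chi c * cnj (chi c))" by (rule parseval[OF prm crd])
  have cc: "chi c * cnj (chi c) = (if c = 0 then 0 else 1)" for c
  proof (cases "c = 0")
    case True thus ?thesis using mc by (simp add: mult_char_def)
  next
    case False thus ?thesis using complex_norm_square[of "chi c"] chi_norm[OF mc False] by simp
  qed
  have ff: "(\<Sum>c\<in>UNIV. chi c * psi (c*x)) * cnj (\<Sum>c\<in>UNIV. chi c * psi (c*x))
          = (if x = 0 then 0 else G * cnj G)" for x
    unfolding chi_psi_sum[OF mc nt] G_def using cc[of x] by (auto simp: algebra_simps)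
  have "of_nat (CARD('a) - 1) * (G * cnj G) = of_nat CARD('a) * of_nat (CARD('a) - 1)"
    using P unfolding ff cc sum_if0 by simp
  moreover have "CARD('a) - 1 \<noteq> 0" using card_ge2[where 'a='a] by simp
  ultimately have "G * cnj G = of_nat CARD('a)" by simp
  hence "complex_of_real ((cmod G)\<^sup>2) = complex_of_real (real CARD('a))"
    by (metis complex_norm_square of_real_of_nat_eq)
  thus ?thesis unfolding G_def of_real_eq_iff .
qed

lemma S_alt: "S_sum A c = (\<Sum>a\<in>A. psi (a * c))"
  by (simp add: S_sum_def psi_def)

lemma S_parseval:
  fixes A :: "'a set"
  shows "(\<Sum>c\<in>UNIV. S_sum A c * cnj (S_sum A c)) = of_nat CARD('a) * of_nat (card A)"
proof -
  define f where "f a = (if a \<in> A then 1 else (0::complex))" for a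
  have Sf: "S_sum A c = (\<Sum>a\<in>UNIV. f a * psi (a * c))" for c
  proof -
    have "(\<Sum>a\<in>UNIV. f a * psi (a * c)) = (\<Sum>a\<in>UNIV. if a \<in> A then psi (a * c) else 0)"
      by (rule sum.cong) (auto simp: f_def)
    thus ?thesis unfolding S_alt using sum.inter_restrict[of UNIV "\<lambda>a. psi (a * c)" A] by simp
  qed
  have "(\<Sum>c\<in>UNIV. f c * cnj (f c)) = (\<Sum>c\<in>UNIV. if c \<in> A then 1 else 0)"
    by (rule sum.cong) (auto simp: f_def)
  also have "\<dots> = of_nat (card A)"
    using sum.inter_restrict[of UNIV "\<lambda>a. 1::complex" A] by simp
  finally show ?thesis unfolding Sf using parseval[OF prm crd, of f] by simp
qed

lemma S_sq: "S_sum A (c::'a) * cnj (S_sum A c) = (\<Sum>a\<in>A. \<Sum>b\<in>A. psi (c * (a - b)))"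
proof -
  have "psi (a * c) * cnj (psi (b * c)) = psi (c * (a - b))" for a b
  proof -
    have "c * (a - b) = a * c - b * c" by (simp add: algebra_simps)
    moreover have "psi (a * c - b * c) = psi (a * c) * cnj (psi (b * c))" by (rule psi_diff[OF prm crd])
    ultimately show ?thesis by simp
  qed
  thus ?thesis unfolding S_alt by (simp add: sum_product)
qed

lemma main_identity:
  fixes chi :: "'a \<Rightarrow> complex"
  assumes mc: "mult_char chi" and nt: "\<exists>x. x \<noteq> 0 \<and> chi x \<noteq> 1"
  shows "(\<Sum>c\<in>UNIV. chi c * (S_sum A c * cnj (S_sum A c)))
       = gauss_sum chi * (\<Sum>a\<in>A. \<Sum>b\<in>A. if a = b then 0 else cnj (chi (a - b)))"
proof -
  have "(\<Sum>c\<in>UNIV. chi c * (S_sum A c * cnj (S_sum A c)))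
      = (\<Sum>c\<in>UNIV. \<Sum>a\<in>A. \<Sum>b\<in>A. chi c * psi (c * (a - b)))"
    unfolding S_sq by (simp add: sum_distrib_left)
  also have "\<dots> = (\<Sum>a\<in>A. \<Sum>c\<in>UNIV. \<Sum>b\<in>A. chi c * psi (c * (a - b)))"
    by (rule sum.swap)
  also have "\<dots> = (\<Sum>a\<in>A. \<Sum>b\<in>A. \<Sum>c\<in>UNIV. chi c * psi (c * (a - b)))"
    by (rule sum.cong[OF refl], rule sum.swap)
  also have "\<dots> = (\<Sum>a\<in>A. \<Sum>b\<in>A. gauss_sum chi * (if a = b then 0 else cnj (chi (a - b))))"
    by (intro sum.cong refl) (simp add: chi_psi_sum[OF mc nt] mult.commute)
  also have "\<dots> = gauss_sum chi * (\<Sum>a\<in>A. \<Sum>b\<in>A. if a = b then 0 else cnj (chi (a - b)))"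
    by (simp add: sum_distrib_left)
  finally show ?thesis .
qed

end


theorem proposition3p2:
  fixes p :: nat and chi :: "'a::{field,finite} \<Rightarrow> complex" and A :: "'a set"
  assumes "prime p" and "odd p" and "CHAR('a) = p"
    and "\<exists>m. CARD('a) = p ^ (2 * m)"
    and "mult_char chi" and "\<exists>x. x \<noteq> 0 \<and> chi x \<noteq> 1"
    and "real (card A) = sqrt (real CARD('a))"
  shows "(\<forall>a\<in>A. \<forall>b\<in>A. a \<noteq> b \<longrightarrow> chi (a - b) = 1) \<longleftrightarrow>
         (\<forall>c. c \<noteq> 0 \<longrightarrow> same_arg (chi c * complex_of_real ((cmod (S_sum A c))\<^sup>2)) (gauss_sum chi))"
proof -
  obtain m where cm: "CARD('a) = p ^ (2 * m)" using assms(4) by blast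
  have prm: "prime CHAR('a)" using assms(1,3) by simp
  have crd: "CARD('a) = CHAR('a) ^ (2 * m)" using cm assms(3) by simp
  note mc = assms(5) and nt = assms(6)
  define k where "k = card A"
  have fA: "finite A" by simp
  have "(real k)\<^sup>2 = real CARD('a)" using assms(7) unfolding k_def by simp
  hence qk: "CARD('a) = k ^ 2" by (metis of_nat_eq_iff of_nat_power)
  have kpos: "k > 0" using qk card_ge2[where 'a='a] by (cases k) auto
  define G where "G = gauss_sum chi"
  define z where "z c = chi c * complex_of_real ((cmod (S_sum A c))\<^sup>2)" for c
  define D where "D = (\<Sum>a\<in>A. \<Sum>b\<in>A. if a = b then 0 else cnj (chi (a - b)))"
  define N where "N = real k * (real k - 1)"
  have z_alt: "z c = chi c * (S_sum A c * cnj (S_sum A c))" for c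
    unfolding z_def complex_norm_square ..
  have sumz: "(\<Sum>c\<in>UNIV. z c) = G * D"
    unfolding z_alt G_def D_def by (rule main_identity[OF prm crd mc nt])
  have chi0: "chi 0 = 0" using mc by (simp add: mult_char_def)
  have normz: "cmod (z c) = (if c = 0 then 0 else (cmod (S_sum A c))\<^sup>2)" for c
    using chi_norm[OF mc, of c] chi0 unfolding z_def by (simp add: norm_mult norm_power)
  have S0: "S_sum A 0 = of_nat k" unfolding S_alt[OF prm crd] k_def by (simp add: psi_zero[OF prm crd])
  have parsR: "(\<Sum>c\<in>UNIV. (cmod (S_sum A c))\<^sup>2) = real CARD('a) * real k"
  proof -
    have "complex_of_real (\<Sum>c\<in>UNIV. (cmod (S_sum A c))\<^sup>2) = complex_of_real (real CARD('a) * real k)"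
    proof -
      have "complex_of_real (\<Sum>c\<in>UNIV. (cmod (S_sum A c))\<^sup>2) = (\<Sum>c\<in>UNIV. S_sum A c * cnj (S_sum A c))"
        by (simp only: of_real_sum complex_norm_square)
      thus ?thesis using S_parseval[OF prm crd, of A] unfolding k_def by simp
    qed
    thus ?thesis by (simp only: of_real_eq_iff)
  qed
  have sumnorm: "(\<Sum>c\<in>UNIV. cmod (z c)) = real k * N"
  proof -
    have "(\<Sum>c\<in>UNIV. (cmod (S_sum A c))\<^sup>2) = (cmod (S_sum A 0))\<^sup>2 + (\<Sum>c\<in>UNIV - {0}. (cmod (S_sum A c))\<^sup>2)"
      by (rule sum.remove) auto
    moreover have "(\<Sum>c\<in>UNIV. cmod (z c)) = cmod (z 0) + (\<Sum>c\<in>UNIV - {0}. cmod (z c))"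
      by (rule sum.remove) auto
    moreover have "(\<Sum>c\<in>UNIV - {0}. cmod (z c)) = (\<Sum>c\<in>UNIV - {0}. (cmod (S_sum A c))\<^sup>2)"
      by (rule sum.cong) (auto simp: normz)
    ultimately have "(\<Sum>c\<in>UNIV. cmod (z c)) = real CARD('a) * real k - (real k)\<^sup>2"
      using parsR S0 normz[of 0] by simp
    thus ?thesis unfolding N_def qk by (simp add: power2_eq_square algebra_simps)
  qed
  have normG: "cmod G = real k"
  proof -
    have "(cmod G)\<^sup>2 = (real k)\<^sup>2" using gauss_norm[OF prm crd mc nt] qk unfolding G_def by simp
    thus ?thesis by (simp add: power2_eq_iff_nonneg)
  qed
  define u where "u = sgn G"
  have Gnz: "G \<noteq> 0" using normG kpos by auto
  have Gu: "G = complex_of_real (real k) * u"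
    unfolding u_def sgn_eq using Gnz normG kpos by simp
  have nu: "cmod u = 1" unfolding u_def using Gnz by (simp add: norm_sgn)
  have ucu: "u * cnj u = 1" using complex_norm_square[of u] nu by simp
  have ArgG: "Arg G = Arg u" unfolding Gu using kpos by (intro Arg_times_of_real) simp
  show ?thesis
  proof
    assume H: "\<forall>a\<in>A. \<forall>b\<in>A. a \<noteq> b \<longrightarrow> chi (a - b) = 1"
    have "D = (\<Sum>a\<in>A. \<Sum>b\<in>A. if a = b then 0 else 1)"
      unfolding D_def using H by (intro sum.cong refl) auto
    also have "\<dots> = complex_of_real N"
      unfolding count_pairs[OF fA] N_def k_def by simp
    finally have DN: "D = complex_of_real N" .
    define w where "w c = z c * cnj u" for c
    have "(\<Sum>c\<in>UNIV. w c) = complex_of_real (real k * N)"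
      unfolding w_def sum_distrib_right[symmetric] sumz DN Gu
      using ucu by (simp add: algebra_simps)
    hence "(\<Sum>c\<in>UNIV. Re (w c)) = real k * N" by (metis Re_complex_of_real Re_sum)
    hence eqs: "(\<Sum>c\<in>UNIV. Re (w c)) = (\<Sum>c\<in>UNIV. cmod (z c))" using sumnorm by simp
    have nw: "cmod (w c) = cmod (z c)" for c unfolding w_def using nu by (simp add: norm_mult)
    have req: "Re (w c) = cmod (z c)" for c
      by (rule sum_le_eq_imp[OF _ _ eqs]) (auto simp: nw[symmetric] complex_Re_le_cmod)
    have zc: "z c = complex_of_real (cmod (z c)) * u" for c
    proof -
      have "w c = complex_of_real (cmod (z c))" using re_eq_norm[of "w c"] req[of c] nw[of c] by simp
      moreover have "z c = w c * u" unfolding w_def using ucu by (simp add: mult.assoc mult.commute)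
      ultimately show ?thesis by simp
    qed
    show "\<forall>c. c \<noteq> 0 \<longrightarrow> same_arg (chi c * complex_of_real ((cmod (S_sum A c))\<^sup>2)) (gauss_sum chi)"
    proof (intro allI impI)
      fix c :: 'a
      show "same_arg (chi c * complex_of_real ((cmod (S_sum A c))\<^sup>2)) (gauss_sum chi)"
      proof (cases "z c = 0")
        case True thus ?thesis unfolding same_arg_def z_def by simp
      next
        case False
        hence "cmod (z c) > 0" by simp
        hence "Arg (z c) = Arg u" using zc[of c] by (metis Arg_times_of_real)
        thus ?thesis unfolding same_arg_def z_def[symmetric] G_def[symmetric] ArgG by simp
      qed
    qed
  next
    assume H: "\<forall>c. c \<noteq> 0 \<longrightarrow> same_arg (chi c * complex_of_real ((cmod (S_sum A c))\<^sup>2)) (gauss_sum chi)"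
    have zc: "z c = complex_of_real (cmod (z c)) * u" for c
    proof (cases "z c = 0")
      case True thus ?thesis by simp
    next
      case False
      hence "c \<noteq> 0" unfolding z_def using chi0 by auto
      hence "Arg (z c) = Arg G" using H False Gnz unfolding same_arg_def z_def G_def by auto
      hence "sgn (z c) = u" unfolding u_def using False Gnz by (metis cis_Arg)
      thus ?thesis using False by (auto simp: sgn_eq field_simps)
    qed
    have "(\<Sum>c\<in>UNIV. z c) = complex_of_real (\<Sum>c\<in>UNIV. cmod (z c)) * u"
      by (subst zc) (simp add: sum_distrib_right)
    also have "\<dots> = complex_of_real N * G" unfolding sumnorm Gu by simp
    finally have "G * D = complex_of_real N * G" unfolding sumz .
    hence DN: "D = complex_of_real N" using Gnz by (simp add: mult.commute)
    define g where "g = (\<lambda>(a::'a, b). if a = b then 0 else (1::real))"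
    define f where "f = (\<lambda>(a::'a, b). Re (if a = b then 0 else cnj (chi (a - b))))"
    have "(\<Sum>x\<in>A \<times> A. f x) = Re D"
      unfolding D_def f_def Re_sum sum.cartesian_product[symmetric] by (simp add: case_prod_beta)
    also have "\<dots> = (\<Sum>x\<in>A \<times> A. g x)"
      unfolding DN N_def g_def sum.cartesian_product[symmetric] count_pairs[OF fA, symmetric] k_def
      by (simp add: case_prod_beta)
    finally have eqs: "(\<Sum>x\<in>A \<times> A. f x) = (\<Sum>x\<in>A \<times> A. g x)" .
    have fg: "f x \<le> g x" if "x \<in> A \<times> A" for x
    proof -
      obtain a b where x: "x = (a, b)" by force
      show ?thesis
      proof (cases "a = b")
        case True thus ?thesis unfolding x f_def g_def by simp
      next
        case False
        hence "cmod (chi (a - b)) = 1" using chi_norm[OF mc, of "a - b"] by simp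
        thus ?thesis unfolding x f_def g_def using False complex_Re_le_cmod[of "chi (a - b)"] by simp
      qed
    qed
    show "\<forall>a\<in>A. \<forall>b\<in>A. a \<noteq> b \<longrightarrow> chi (a - b) = 1"
    proof (intro ballI impI)
      fix a b assume ab: "a \<in> A" "b \<in> A" "a \<noteq> b"
      have "f (a, b) = g (a, b)" by (rule sum_le_eq_imp[OF _ fg eqs]) (use ab in auto)
      hence re1: "Re (chi (a - b)) = 1" unfolding f_def g_def using ab by simp
      have n1: "cmod (chi (a - b)) = 1" using chi_norm[OF mc, of "a - b"] ab by simp
      show "chi (a - b) = 1" using re_eq_norm[of "chi (a - b)"] re1 n1 by simp
    qed
  qed
qed

end
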